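(* In the setting described in the context, the elements $1$, $\rho$, $\gamma_j$ ($1\le j\le 6n+1$), $\delta_A$, $\delta_{B,j}^{\pm}$ ($1\le j\le 3n$) and $\delta_{C,j}^{\pm}$ ($1\le j\le 6n+1$) of $K$ are all totally positive.
   Context: For integers $m\ge0$ define integers $x_m,y_m$ by $\frac{x_m+y_m\sqrt5}{2}=\big(\frac{1+\sqrt5}{2}\big)^m$. Let $n\ge0$ be an integer such that $p:=y_{12n+3}^2-1$ and $r:=x_{12n+3}^2-1$ are squarefree, and let $K=\mathbb{Q}(\sqrt5,\sqrt p)$ (note $r=5p$, so $\sqrt r\in K$). Write $X=x_{12n+3}$, $Y=y_{12n+3}$, and $[a,b,c,d]:=a+b\sqrt5+c\sqrt p+d\sqrt r$. Define $\rho:=[\frac{X+Y}{2},0,-\frac12,\frac12]$; for $1\le j\le 6n+1$, $\gamma_j:=[\frac{y_{2j-1}X+1}{2},\frac{x_{2j-1}X-(-1)^j}{10},(-1)^j\frac{x_{2j-1}}{2},(-1)^j\frac{y_{2j-1}}{2}]$; and \[ \delta_A:=\Big[\tfrac14,-\tfrac1{20},0,-\tfrac{1}{5(X+Y)}\Big],\quad \delta_{B,j}^{\pm}:=\Big[\tfrac14,-\tfrac1{20},\pm\tfrac{X-x_{4j-1}}{20p},\mp\tfrac{X-y_{4j-1}}{4r}\Big]\ (1\le j\le 3n), \] \[ \delta_{C,j}^{\pm}:=\Big[\tfrac14,\pm\tfrac1{20},-\tfrac{Y-y_{2j-1}}{4p},\mp\tfrac{Y-x_{2j-1}}{4r}\Big]\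 (1\le j\le 6n+1). \] An element is totally positive if all four of its real conjugates are positive. *)

theory Defs
  imports Complex_Main "HOL-Computational_Algebra.Squarefree"
begin

text \<open>The integers x_m, y_m with (x_m + y_m sqrt 5)/2 = ((1 + sqrt 5)/2)^m, computed by
  the recursion obtained from multiplying by (1 + sqrt 5)/2:
  (x + y sqrt 5)/2 * (1 + sqrt 5)/2 = ((x + 5y)/2 + (x + y)/2 sqrt 5)/2.
  The lemma xy_char below certifies the defining property.\<close>
fun xy :: "nat \<Rightarrow> int \<times> int" where
  "xy 0 = (2, 0)"
| "xy (Suc m) = (case xy m of (a, b) \<Rightarrow> ((a + 5 * b) div 2, (a + b) div 2))"

definition xs :: "nat \<Rightarrow> int" where "xs m = fst (xy m)"
definition ys :: "nat \<Rightarrow> int" where "ys m = snd (xy m)"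

lemma xy_parity: "even (fst (xy m) + snd (xy m))"
proof (induction m)
  case 0 then show ?case by simp
next
  case (Suc m)
  obtain a b where ab: "xy m = (a, b)" by (cases "xy m")
  with Suc have e: "even (a + b)" by simp
  then obtain k where k: "a + b = 2 * k" by blast
  have a: "a = 2*k - b" using k by simp
  have "xy (Suc m) = (k + 2*b, k)" using ab a by simp
  then show ?case by simp
qed

lemma xy_char:
  "(real_of_int (xs m) + real_of_int (ys m) * sqrt 5) / 2 = ((1 + sqrt 5) / 2) ^ m"
proof (induction m)
  case 0 then show ?case by (simp add: xs_def ys_def)
next
  case (Suc m)
  obtain a b where ab: "xy m = (a, b)" by (cases "xy m")
  from xy_parity[of m] ab have "even (a + b)" by simp
  then obtain k where k: "a + b = 2 * k" by blast
  have a: "a = 2*k - b" using k by simp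
  have x: "xs (Suc m) = k + 2*b" using ab a by (simp add: xs_def)
  have y: "ys (Suc m) = k" using ab a by (simp add: ys_def)
  have IH: "(real_of_int a + real_of_int b * sqrt 5) / 2 = ((1 + sqrt 5) / 2) ^ m"
    using Suc ab by (simp add: xs_def ys_def)
  have s5: "sqrt 5 * sqrt 5 = (5::real)" by simp
  have "((1 + sqrt 5) / 2) ^ Suc m
      = (real_of_int a + real_of_int b * sqrt 5) / 2 * ((1 + sqrt 5) / 2)"
    using IH by simp
  also have "\<dots> = (real_of_int (k + 2*b) + real_of_int k * sqrt 5) / 2"
  proof -
    have kr: "real_of_int a + real_of_int b = 2 * real_of_int k" using k by linarith
    have "(real_of_int a + real_of_int b * sqrt 5) / 2 * ((1 + sqrt 5) / 2)
        = (real_of_int a + 5 * real_of_int b + (real_of_int a + real_of_int b) * sqrt 5) / 4"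
      by (simp add: field_simps s5)
    also have "\<dots> = (real_of_int (k + 2*b) + real_of_int k * sqrt 5) / 2"
      using kr by (simp add: field_simps)
    finally show ?thesis .
  qed
  finally show ?case using x y by simp
qed

text \<open>K = Q(sqrt 5, sqrt p), r = 5p, sqrt r = sqrt 5 * sqrt p. The element
  [a,b,c,d] = a + b sqrt 5 + c sqrt p + d sqrt r has the four real conjugates
  obtained from sqrt 5 \<mapsto> s sqrt 5, sqrt p \<mapsto> t sqrt p (s, t = \<plusminus>1),
  hence sqrt r \<mapsto> s t sqrt r.\<close>
definition conjK :: "real \<Rightarrow> real \<Rightarrow> real \<Rightarrow> real \<Rightarrow> real \<Rightarrow> real \<Rightarrow> real \<Rightarrow> real \<Rightarrow> real" where
  "conjK p r s t a b c d = a + s * b * sqrt 5 + t * c * sqrt p + s * t * d * sqrt r"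

definition totally_positive :: "real \<Rightarrow> real \<Rightarrow> real \<Rightarrow> real \<Rightarrow> real \<Rightarrow> real \<Rightarrow> bool" where
  "totally_positive p r a b c d \<longleftrightarrow>
     (\<forall>s\<in>{1, -1}. \<forall>t\<in>{1, -1}. conjK p r s t a b c d > 0)"

end

theory Submission
  imports Defs
begin

lemma xy_Suc_real:
  "real_of_int (xs (Suc m)) = (real_of_int (xs m) + 5 * real_of_int (ys m)) / 2 \<and>
   real_of_int (ys (Suc m)) = (real_of_int (xs m) + real_of_int (ys m)) / 2"
proof -
  obtain a b where ab: "xy m = (a, b)" by (cases "xy m")
  from xy_parity[of m] ab have "even (a + b)" by simp
  then obtain k where k: "a + b = 2 * k" by blast
  have a: "a = 2*k - b" using k by simp
  have x: "xs (Suc m) = k + 2*b" using ab a by (simp add: xs_def)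
  have y: "ys (Suc m) = k" using ab a by (simp add: ys_def)
  have "xs m = a" "ys m = b" using ab by (simp_all add: xs_def ys_def)
  then show ?thesis using x y a by simp
qed

lemma xy_conj:
  "(real_of_int (xs m) - real_of_int (ys m) * sqrt 5) / 2 = ((1 - sqrt 5) / 2) ^ m"
proof (induction m)
  case 0 then show ?case by (simp add: xs_def ys_def)
next
  case (Suc m)
  have s5: "sqrt 5 * sqrt 5 = (5::real)" by simp
  have "((1 - sqrt 5) / 2) ^ Suc m = (real_of_int (xs m) - real_of_int (ys m) * sqrt 5) / 2 * ((1 - sqrt 5) / 2)"
    using Suc by simp
  also have "\<dots> = (real_of_int (xs (Suc m)) - real_of_int (ys (Suc m)) * sqrt 5) / 2"
    unfolding xy_Suc_real[of m, THEN conjunct1] xy_Suc_real[of m, THEN conjunct2]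
    by (simp add: field_simps s5)
  finally show ?case by simp
qed

definition phi :: real where "phi = (1 + sqrt 5) / 2"
definition gm :: real where "gm = (sqrt 5 - 1) / 2"

lemma s5_facts: "sqrt 5 * sqrt 5 = (5::real)" "sqrt (5::real) > 2" "sqrt (5::real) < 3"
proof -
  show "sqrt 5 * sqrt 5 = (5::real)" by simp
  show "sqrt (5::real) > 2" by (rule real_less_rsqrt) simp
  show "sqrt (5::real) < 3" by (rule real_less_lsqrt) simp_all
qed

lemma phi_gg: "phi * gm = 1" "phi > 1" "gm > 0" "gm < 1" "phi * phi = phi + 1"
  using s5_facts by (auto simp: phi_def gm_def field_simps)

lemma xy_odd:
  assumes "odd m"
  shows "real_of_int (xs m) = phi ^ m - gm ^ m \<and> real_of_int (ys m) * sqrt 5 = phi ^ m + gm ^ m"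
proof -
  have c: "(1 - sqrt 5) / 2 = - gm" by (simp add: gm_def field_simps)
  have "((1 - sqrt 5) / 2) ^ m = - (gm ^ m)" unfolding c using assms by simp
  then show ?thesis using xy_char[of m] xy_conj[of m] unfolding phi_def[symmetric]
    by (auto simp: field_simps)
qed

lemma tp_intro:
  assumes "p \<ge> 0" "sqrt r = sqrt 5 * sqrt p"
    and "\<And>u. u = sqrt 5 \<or> u = - sqrt 5 \<Longrightarrow> \<bar>c + d*u\<bar> * sqrt p < a + b*u"
  shows "totally_positive p r a b c d"
  unfolding totally_positive_def
proof (intro ballI)
  fix s t :: real assume s: "s \<in> {1, -1}" and t: "t \<in> {1, -1}"
  define u where "u = s * sqrt 5"
  have u: "u = sqrt 5 \<or> u = - sqrt 5" using s by (auto simp: u_def)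
  have key: "conjK p r s t a b c d = (a + b*u) + t*((c + d*u)*sqrt p)"
    unfolding conjK_def u_def using assms(2) by (simp add: algebra_simps)
  have q: "sqrt p \<ge> 0" using assms(1) by simp
  have "\<bar>t*((c + d*u)*sqrt p)\<bar> = \<bar>c + d*u\<bar> * sqrt p" using t q by (auto simp: abs_mult)
  then have "t*((c + d*u)*sqrt p) \<ge> - (\<bar>c + d*u\<bar> * sqrt p)" by linarith
  with assms(3)[OF u] show "conjK p r s t a b c d > 0" unfolding key by linarith
qed

lemma rho_ok:
  assumes "q > 0" "q < Y" "sqrt 5 * q < X" "u = sqrt 5 \<or> u = - sqrt 5"
  shows "\<bar>- 1 / 2 + 1 / 2 * u\<bar> * q < (X + Y) / 2 + 0 * u"
  using assms(4)
proof
  assume u: "u = sqrt 5"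
  have "\<bar>- 1 / 2 + 1 / 2 * u\<bar> * q = (sqrt 5 * q - q) / 2" using u s5_facts assms(1)
    by (simp add: abs_of_pos algebra_simps)
  then show ?thesis using assms by simp
next
  assume u: "u = - sqrt 5"
  have "\<bar>- 1 / 2 + 1 / 2 * u\<bar> * q = (sqrt 5 * q + q) / 2" using u s5_facts assms(1)
    by (simp add: abs_of_neg algebra_simps)
  then show ?thesis using assms by simp
qed

lemma gamma_ok:
  fixes F G x y X q e u :: real
  assumes "x = F - G" "y = (F + G) / sqrt 5" "F > 0" "G > 0" "X > sqrt 5 * q" "e = 1 \<or> e = -1" "q > 0"
    "u = sqrt 5 \<or> u = - sqrt 5"
  shows "\<bar>e * x / 2 + e * y / 2 * u\<bar> * q < (y * X + 1) / 2 + (x * X - e) / 10 * u"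
proof -
  have s5: "sqrt 5 * sqrt 5 = (5::real)" "sqrt (5::real) > 2" "sqrt (5::real) < 3" by (fact s5_facts)+
  have ee: "\<bar>e\<bar> = 1" using assms(6) by auto
  have pe: "1/2 - \<bar>e\<bar> * sqrt 5 / 10 > 0" using ee s5 by simp
  have e1: "1/2 - e * sqrt 5 / 10 > 0" "1/2 + e * sqrt 5 / 10 > 0" using assms(6) s5 by auto
  from assms(8) show ?thesis
  proof
    assume u: "u = sqrt 5"
    have L: "e * x / 2 + e * y / 2 * u = e * F" unfolding u assms(1,2) using s5 by (simp add: field_simps)
    have R: "(y * X + 1) / 2 + (x * X - e) / 10 * u = F * (X / sqrt 5) + (1/2 - e * sqrt 5 / 10)"
      unfolding u assms(1,2) using s5 by (simp add: field_simps)
    have "q < X / sqrt 5" using assms(5) s5 by (simp add: field_simps)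
    then have "F * q < F * (X / sqrt 5)" using assms(3) by (intro mult_strict_left_mono)
    then show ?thesis unfolding L R using ee e1 assms(3) by (simp add: abs_mult)
  next
    assume u: "u = - sqrt 5"
    have L: "e * x / 2 + e * y / 2 * u = - e * G" unfolding u assms(1,2) using s5 by (simp add: field_simps)
    have R: "(y * X + 1) / 2 + (x * X - e) / 10 * u = G * (X / sqrt 5) + (1/2 + e * sqrt 5 / 10)"
      unfolding u assms(1,2) using s5 by (simp add: field_simps)
    have "q < X / sqrt 5" using assms(5) s5 by (simp add: field_simps)
    then have "G * q < G * (X / sqrt 5)" using assms(4) by (intro mult_strict_left_mono)
    then show ?thesis unfolding L R using ee e1 assms(4) by (simp add: abs_mult)
  qed
qed

lemma s5_lt: "sqrt (5::real) < 5/2"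
  by (rule real_less_lsqrt) (simp_all add: power2_eq_square)

lemma abs_helper:
  fixes q K M \<sigma> :: real
  assumes "q > 0" "\<sigma> = 1 \<or> \<sigma> = -1" "\<bar>K\<bar> < M * q"
  shows "\<bar>\<sigma> * K / (20 * (q * q))\<bar> * q < M / 20"
proof -
  have "\<bar>\<sigma> * K / (20 * (q * q))\<bar> * q = \<bar>K\<bar> / (20 * q)"
    using assms(1,2) by (auto simp: abs_mult abs_divide field_simps)
  also have "\<dots> < M * q / (20 * q)" using assms(1,3) by (intro divide_strict_right_mono) auto
  also have "\<dots> = M / 20" using assms(1) by simp
  finally show ?thesis .
qed

lemma deltaA_ok:
  fixes X Y q u :: real
  assumes "q > 0" "Y > 0" "sqrt 5 * q < X" "X \<le> sqrt 5 * Y" "u = sqrt 5 \<or> u = - sqrt 5"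
  shows "\<bar>0 + - 1 / (5 * (X + Y)) * u\<bar> * q < 1 / 4 + - 1 / 20 * u"
proof -
  have s5: "sqrt 5 * sqrt 5 = (5::real)" "sqrt (5::real) > 2" "sqrt (5::real) < 3" by (fact s5_facts)+
  have XY: "X + Y > 0" using assms s5 by (smt (verit) mult_pos_pos)
  have L: "\<bar>0 + - 1 / (5 * (X + Y)) * u\<bar> * q = sqrt 5 * q / (5 * (X + Y))"
    using assms(5) XY assms(1) s5 by (auto simp: abs_mult abs_divide)
  have "sqrt 5 * q / (5 * (X + Y)) < X / (5 * (X + Y))"
    using assms(3) XY by (intro divide_strict_right_mono) auto
  also have "X / (5 * (X + Y)) \<le> (5 - sqrt 5) / 20"
  proof -
    have "(sqrt 5 - 1) * X \<le> (sqrt 5 - 1) * (sqrt 5 * Y)"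
      using assms(4) s5 by (intro mult_left_mono) auto
    then have "20 * X \<le> (5 - sqrt 5) * (5 * (X + Y))" using s5 by (simp add: algebra_simps)
    then show ?thesis using XY by (simp add: field_simps)
  qed
  also have "(5 - sqrt 5) / 20 \<le> 1 / 4 + - 1 / 20 * u" using assms(5) s5 by auto
  finally show ?thesis unfolding L .
qed

lemma deltaB_ok:
  fixes F G x y X q u p r \<sigma> :: real
  assumes "q > 0" "p = q * q" "r = 5 * (q * q)" "x = F - G" "y = (F + G) / sqrt 5"
    "G > 0" "G \<le> 1" "G * X \<ge> 1" "(X - sqrt 5 * q) * (X + sqrt 5 * q) = 1" "sqrt 5 * q < X"
    "X \<ge> 3" "2 * F > 1 + sqrt 5" "2 * F \<le> (1 + sqrt 5) * X"
    "\<sigma> = 1 \<or> \<sigma> = -1" "u = sqrt 5 \<or> u = - sqrt 5"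
  shows "\<bar>\<sigma> * (X - x) / (20 * p) + - \<sigma> * (X - y) / (4 * r) * u\<bar> * q < 1 / 4 + - 1 / 20 * u"
proof -
  have s5: "sqrt 5 * sqrt 5 = (5::real)" "sqrt (5::real) > 2" "sqrt (5::real) < 3" by (fact s5_facts)+
  have Xq: "X + sqrt 5 * q > 0" using assms(1,10) s5 by (smt (verit) mult_pos_pos)
  from assms(15) show ?thesis
  proof
    assume u: "u = sqrt 5"
    define K where "K = (1 - sqrt 5) * X + 2 * G"
    have E: "\<sigma> * (X - x) / (20 * p) + - \<sigma> * (X - y) / (4 * r) * u = \<sigma> * K / (20 * (q * q))"
      unfolding u assms(2-5) K_def using s5 assms(1) by (simp add: field_simps)
    have R: "1 / 4 + - 1 / 20 * u = (5 - sqrt 5) / 20" using u by simp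
    have "\<bar>K\<bar> < (5 - sqrt 5) * q"
    proof -
      have "2 * G * X \<ge> 2" using assms(8) by simp
      moreover have "2 * G * (sqrt 5 * q) \<ge> 0" using assms(1,6) s5 by simp
      ultimately have "(sqrt 5 - 1) < 2 * G * (X + sqrt 5 * q)" using s5 by (simp add: algebra_simps)
      then have "(sqrt 5 - 1) * (X - sqrt 5 * q) < 2 * G * (X + sqrt 5 * q) * (X - sqrt 5 * q)"
        using assms(10) by (intro mult_strict_right_mono) auto
      also have "\<dots> = 2 * G * ((X - sqrt 5 * q) * (X + sqrt 5 * q))" by (simp only: ac_simps)
      also have "\<dots> = 2 * G" using assms(9) by simp
      finally have 1: "(sqrt 5 - 1) * (X - sqrt 5 * q) < 2 * G" .
      have 2: "(sqrt 5 - 1) * X \<ge> (sqrt 5 - 1) * 3" using assms(11) s5 by (intro mult_left_mono) auto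
      have 3: "(5 - sqrt 5) * q > 0" using assms(1) s5 by simp
      show ?thesis using 1 2 3 assms(7) s5 unfolding K_def by (simp add: algebra_simps abs_if)
    qed
    then show ?thesis unfolding E R using abs_helper assms(1,14) by blast
  next
    assume u: "u = - sqrt 5"
    define K where "K = (1 + sqrt 5) * X - 2 * F"
    have E: "\<sigma> * (X - x) / (20 * p) + - \<sigma> * (X - y) / (4 * r) * u = \<sigma> * K / (20 * (q * q))"
      unfolding u assms(2-5) K_def using s5 assms(1) by (simp add: field_simps)
    have R: "1 / 4 + - 1 / 20 * u = (5 + sqrt 5) / 20" using u by simp
    have "\<bar>K\<bar> < (5 + sqrt 5) * q"
    proof -
      have "X + sqrt 5 * q > 1" using assms(11) assms(1) s5 by (smt (verit) mult_pos_pos)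
      then have "X - sqrt 5 * q < 1" using assms(9) assms(10)
        by (smt (verit) mult_less_cancel_left1)
      then have "(1 + sqrt 5) * (X - sqrt 5 * q) < (1 + sqrt 5) * 1" using s5
        by (intro mult_strict_left_mono) auto
      then have 1: "(1 + sqrt 5) * X - (5 + sqrt 5) * q < 2 * F" using assms(12) s5 by (simp add: algebra_simps)
      have 3: "(5 + sqrt 5) * q > 0" using assms(1) s5 by simp
      show ?thesis using 1 3 assms(13) unfolding K_def by (simp add: algebra_simps abs_if)
    qed
    then show ?thesis unfolding E R using abs_helper assms(1,14) by blast
  qed
qed

lemma deltaC_w:
  fixes F G x y Y q w p r :: real
  assumes "q > 0" "p = q * q" "x = F - G" "y = (F + G) / sqrt 5"
    "G > 0" "G \<le> 1" "sqrt 5 * G * Y \<ge> 2" "(Y - q) * (Y + q) = 1" "q < Y" "Y \<ge> 2"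
    "2 * F \<ge> 1 + sqrt 5" "2 * sqrt 5 * F \<le> (5 + sqrt 5) * Y"
    "w = sqrt 5 \<or> w = - sqrt 5"
  shows "\<bar>- (Y - y) / (4 * p) - w * (Y - x) / (20 * p)\<bar> * q < (5 + w) / 20"
proof -
  have s5: "sqrt 5 * sqrt 5 = (5::real)" "sqrt (5::real) > 2" "sqrt (5::real) < 3" by (fact s5_facts)+
  define K where "K = 5 * (Y - y) + w * (Y - x)"
  have E: "- (Y - y) / (4 * p) - w * (Y - x) / (20 * p) = (-1) * K / (20 * (q * q))"
    unfolding assms(2) K_def using assms(1) by (simp add: field_simps)
  have Yq: "Y + q > 2" using assms(1,10) by simp
  have "\<bar>K\<bar> < (5 + w) * q"
    using assms(13)
  proof
    assume w: "w = sqrt 5"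
    have K: "K = (5 + sqrt 5) * Y - 2 * sqrt 5 * F" unfolding K_def w assms(3,4) using s5
      by (simp add: field_simps)
    have "(Y - q) * 2 < (Y - q) * (Y + q)" using Yq assms(9) by (intro mult_strict_left_mono) auto
    then have "Y - q < 1/2" using assms(8) by simp
    then have "(5 + sqrt 5) * (Y - q) < (5 + sqrt 5) * (1/2)" using s5 by (intro mult_strict_left_mono) auto
    moreover have "sqrt 5 * (2 * F) \<ge> sqrt 5 * (1 + sqrt 5)" using assms(11) s5 by (intro mult_left_mono) auto
    ultimately have 1: "(5 + sqrt 5) * Y - 2 * sqrt 5 * F < (5 + sqrt 5) * q" using s5 by (simp add: algebra_simps)
    have 3: "(5 + sqrt 5) * q > 0" using assms(1) s5 by simp
    show ?thesis unfolding K w using 1 3 assms(12) by (simp add: abs_if)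
  next
    assume w: "w = - sqrt 5"
    have K: "K = (5 - sqrt 5) * Y - 2 * sqrt 5 * G" unfolding K_def w assms(3,4) using s5
      by (simp add: field_simps)
    have "2 * sqrt 5 * G * q \<ge> 0" using assms(1,5) s5 by simp
    then have "(5 - sqrt 5) < 2 * sqrt 5 * G * (Y + q)" using assms(7) s5 by (simp add: algebra_simps)
    then have "(5 - sqrt 5) * (Y - q) < 2 * sqrt 5 * G * (Y + q) * (Y - q)"
      using assms(9) by (intro mult_strict_right_mono) auto
    also have "\<dots> = 2 * sqrt 5 * G * ((Y - q) * (Y + q))" by (simp only: ac_simps)
    also have "\<dots> = 2 * sqrt 5 * G" using assms(8) by simp
    finally have 1: "(5 - sqrt 5) * Y - 2 * sqrt 5 * G < (5 - sqrt 5) * q" by (simp add: algebra_simps)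
    have "2 * sqrt 5 * G \<le> 2 * sqrt 5" using assms(6) s5 by simp
    moreover have "(5 - sqrt 5) * Y \<ge> (5 - sqrt 5) * 2" using assms(10) s5 by (intro mult_left_mono) auto
    ultimately have 2: "2 * sqrt 5 * G - (5 - sqrt 5) * Y \<le> 0" using s5_lt unfolding left_diff_distrib by linarith
    have 3: "(5 - sqrt 5) * q > 0" using assms(1) s5 by simp
    show ?thesis unfolding K w using 1 2 3 by (simp add: abs_if)
  qed
  then have "\<bar>(-1) * K / (20 * (q * q))\<bar> * q < (5 + w) / 20"
    using abs_helper[of q "-1" K "5 + w"] assms(1) by simp
  then show ?thesis unfolding E .
qed

lemma phi_pow_ge: "k \<ge> 2 \<Longrightarrow> phi ^ k \<ge> phi + 1"
proof -
  assume k: "k \<ge> 2"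
  have "phi ^ 2 \<le> phi ^ k" using k phi_gg(2) by (intro power_increasing) auto
  then show ?thesis using phi_gg(5) by (simp add: power2_eq_square)
qed

lemma per_m:
  assumes "m + 2 \<le> N" "1 \<le> m"
  defines "F \<equiv> phi ^ m" and "G \<equiv> gm ^ m" and "Phi \<equiv> phi ^ N" and "Psi \<equiv> gm ^ N"
  shows "F * G = 1 \<and> F \<ge> phi \<and> G > 0 \<and> G \<le> 1 \<and> G * (Phi + Psi) \<ge> 2
    \<and> F * sqrt 5 \<le> phi * (Phi + Psi) \<and> G * (Phi - Psi) \<ge> 1 \<and> F \<le> phi * (Phi - Psi)
    \<and> (m \<ge> 3 \<longrightarrow> F > phi)"
proof -
  have s5: "sqrt 5 * sqrt 5 = (5::real)" "sqrt (5::real) > 2" "sqrt (5::real) < 3" by (fact s5_facts)+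
  note pg = phi_gg
  define k where "k = N - m"
  have k: "k \<ge> 2" "N = m + k" using assms(1) by (auto simp: k_def)
  have FG: "F * G = 1" unfolding F_def G_def by (simp add: power_mult_distrib[symmetric] pg(1))
  have F1: "F \<ge> phi" unfolding F_def using power_increasing[of 1 m phi] assms(2) pg(2) by simp
  have G0: "G > 0" "G \<le> 1" unfolding G_def using pg(3,4) by (auto intro: power_le_one)
  have Psi: "Psi > 0" "Psi \<le> 1" unfolding Psi_def using pg(3,4) by (auto intro: power_le_one)
  have Phi: "Phi = F * phi ^ k" unfolding Phi_def F_def k(2) by (simp add: power_add)
  have GPhi: "G * Phi = phi ^ k" unfolding Phi using FG by (simp add: mult.assoc[symmetric] mult.commute)
  have pk: "phi ^ k \<ge> phi + 1" using phi_pow_ge k(1) .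
  have pk3: "phi ^ (k + 1) \<ge> 2 * phi + 1"
  proof -
    have "phi * (phi + 1) \<le> phi * phi ^ k" using pk pg(2) by (intro mult_left_mono) auto
    then show ?thesis using pg(5) by (simp add: algebra_simps)
  qed
  have F0: "F > 0" using F1 pg(2) by simp
  have a1: "G * (Phi + Psi) \<ge> 2" using GPhi pk G0 Psi pg(2) by (simp add: algebra_simps) (smt (verit) mult_pos_pos)
  have "F * sqrt 5 \<le> F * (2 * phi + 1)" using F0 s5 by (intro mult_left_mono) (auto simp: phi_def field_simps)
  also have "\<dots> \<le> F * phi ^ (k + 1)" using F0 pk3 by (intro mult_left_mono) auto
  also have "\<dots> = phi * Phi" unfolding Phi by simp
  also have "\<dots> \<le> phi * (Phi + Psi)" using Psi pg(2) by simp
  finally have a2: "F * sqrt 5 \<le> phi * (Phi + Psi)" .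
  have GPsi: "G * Psi \<le> 1" using G0 Psi by (simp add: mult_le_one)
  have a3: "G * (Phi - Psi) \<ge> 1" using GPhi pk GPsi pg(2) by (simp add: algebra_simps)
  have "F * (2 * phi + 1) \<le> F * phi ^ (k + 1)" using F0 pk3 by (intro mult_left_mono) auto
  then have "F * (2 * phi + 1) \<le> phi * Phi" unfolding Phi by (simp add: ac_simps)
  moreover have "phi * Psi \<le> phi" using Psi pg(2) by simp
  moreover have "F * (2 * phi) \<ge> 1 * phi" using F1 pg(2) by (intro mult_mono) auto
  ultimately have a4: "F \<le> phi * (Phi - Psi)" by (simp add: algebra_simps)
  have a5: "m \<ge> 3 \<longrightarrow> F > phi"
  proof
    assume "m \<ge> 3"
    then have "phi ^ 1 < phi ^ m" using pg(2) by (intro power_strict_increasing) auto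
    then show "F > phi" unfolding F_def by simp
  qed
  show ?thesis using FG F1 G0 a1 a2 a3 a4 a5 by blast
qed

theorem proposition4p2:
  fixes n :: nat and X Y p r :: real
  defines "X \<equiv> real_of_int (xs (12 * n + 3))"
      and "Y \<equiv> real_of_int (ys (12 * n + 3))"
      and "p \<equiv> Y ^ 2 - 1"
      and "r \<equiv> X ^ 2 - 1"
  assumes "squarefree (ys (12 * n + 3) ^ 2 - 1)"
      and "squarefree (xs (12 * n + 3) ^ 2 - 1)"
  shows "totally_positive p r 1 0 0 0
    \<and> totally_positive p r ((X + Y) / 2) 0 (- 1 / 2) (1 / 2)
    \<and> (\<forall>j \<in> {1 .. 6 * n + 1}.
         totally_positive p r
           ((real_of_int (ys (2 * j - 1)) * X + 1) / 2)
           ((real_of_int (xs (2 * j - 1)) * X - (- 1) ^ j) / 10)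
           ((- 1) ^ j * real_of_int (xs (2 * j - 1)) / 2)
           ((- 1) ^ j * real_of_int (ys (2 * j - 1)) / 2))
    \<and> totally_positive p r (1 / 4) (- 1 / 20) 0 (- 1 / (5 * (X + Y)))
    \<and> (\<forall>j \<in> {1 .. 3 * n}. \<forall>\<sigma> \<in> {1, -1 :: real}.
         totally_positive p r (1 / 4) (- 1 / 20)
           (\<sigma> * (X - real_of_int (xs (4 * j - 1))) / (20 * p))
           (- \<sigma> * (X - real_of_int (ys (4 * j - 1))) / (4 * r)))
    \<and> (\<forall>j \<in> {1 .. 6 * n + 1}. \<forall>\<sigma> \<in> {1, -1 :: real}.
         totally_positive p r (1 / 4) (\<sigma> / 20)
           (- (Y - real_of_int (ys (2 * j - 1))) / (4 * p))
           (- \<sigma> * (Y - real_of_int (xs (2 * j - 1))) / (4 * r)))"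
proof -
  have s5: "sqrt 5 * sqrt 5 = (5::real)" "sqrt (5::real) > 2" "sqrt (5::real) < 3" by (fact s5_facts)+
  note pg = phi_gg
  define N where "N = 12 * n + 3"
  have oddN: "odd N" unfolding N_def by simp
  define Phi where "Phi = phi ^ N"
  define Psi where "Psi = gm ^ N"
  have XPhi: "X = Phi - Psi" and YPhi: "Y * sqrt 5 = Phi + Psi"
    using xy_odd[OF oddN] unfolding X_def Y_def Phi_def Psi_def N_def by auto
  have PP: "Phi * Psi = 1" unfolding Phi_def Psi_def by (simp add: power_mult_distrib[symmetric] pg(1))
  have Psi: "Psi > 0" "Psi \<le> 1" unfolding Psi_def using pg(3,4) by (auto intro: power_le_one)
  have "phi ^ 3 \<le> Phi" unfolding Phi_def N_def using pg(2) by (intro power_increasing) auto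
  moreover have "phi ^ 3 = 2 * phi + 1" using pg(5) by (simp add: power3_eq_cube algebra_simps)
  ultimately have Phi3: "Phi \<ge> 2 + sqrt 5" by (simp add: phi_def field_simps)
  have X3: "X \<ge> 3" using XPhi Phi3 Psi s5 by simp
  have Y4: "Y * sqrt 5 > 4" using YPhi Phi3 Psi s5 by simp
  have Ypos: "Y > 0"
  proof (rule ccontr)
    assume "\<not> Y > 0"
    then have "Y * sqrt 5 \<le> 0" using s5 by (simp add: mult_nonpos_nonneg)
    then show False using Y4 by simp
  qed
  have "Y * sqrt 5 < Y * 3" using Ypos s5 by (intro mult_strict_left_mono) auto
  then have "Y > 1" using Y4 by simp
  then have "ys (12 * n + 3) > 1" unfolding Y_def by simp
  then have "ys (12 * n + 3) \<ge> 2" by simp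
  then have Y2: "Y \<ge> 2" unfolding Y_def by simp
  have XX: "X * X = 5 * (Y * Y) - 4"
  proof -
    have "X * X - (Y * sqrt 5) * (Y * sqrt 5) = - 4 * (Phi * Psi)" unfolding XPhi YPhi by (simp add: algebra_simps)
    then show ?thesis using PP s5 by (simp add: algebra_simps)
  qed
  define q where "q = sqrt p"
  have pY: "p = Y * Y - 1" unfolding p_def by (simp add: power2_eq_square)
  have "Y * Y \<ge> 2 * 2" using Y2 by (intro mult_mono) auto
  then have p0: "p > 0" using pY by simp
  have qq: "q * q = p" "q > 0" unfolding q_def using p0 by auto
  have YQ: "(Y - q) * (Y + q) = 1" using qq pY by (simp add: algebra_simps)
  have "(Y - q) * (Y + q) > 0" using YQ by simp
  moreover have "Y + q > 0" using qq(2) Y2 by simp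
  ultimately have qY: "q < Y" by (simp add: zero_less_mult_iff)
  have XQ: "(X - sqrt 5 * q) * (X + sqrt 5 * q) = 1"
  proof -
    have "(X - sqrt 5 * q) * (X + sqrt 5 * q) = X * X - (sqrt 5 * sqrt 5) * (q * q)" by (simp add: algebra_simps)
    then show ?thesis using XX qq pY s5 by simp
  qed
  have "sqrt 5 * q > 0" using qq(2) s5 by simp
  then have Xq0: "X + sqrt 5 * q > 0" using X3 by simp
  have "(X - sqrt 5 * q) * (X + sqrt 5 * q) > 0" using XQ by simp
  then have qX: "sqrt 5 * q < X" using Xq0 by (simp add: zero_less_mult_iff)
  have XsY: "X \<le> sqrt 5 * Y" using XPhi YPhi Psi by (simp add: mult.commute)
  have rq: "r = 5 * (q * q)" unfolding r_def using XX qq pY by (simp add: power2_eq_square)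
  have sr: "sqrt r = sqrt 5 * sqrt p" using rq qq by (simp add: real_sqrt_mult)
  have p00: "p \<ge> 0" using p0 by simp
  have t1: "totally_positive p r 1 0 0 0" by (rule tp_intro[OF p00 sr]) simp
  have t2: "totally_positive p r ((X + Y) / 2) 0 (- 1 / 2) (1 / 2)"
    by (rule tp_intro[OF p00 sr], rule rho_ok[of "sqrt p"]) (use qq qY qX q_def in auto)
  have t3: "\<forall>j \<in> {1 .. 6 * n + 1}.
         totally_positive p r
           ((real_of_int (ys (2 * j - 1)) * X + 1) / 2)
           ((real_of_int (xs (2 * j - 1)) * X - (- 1) ^ j) / 10)
           ((- 1) ^ j * real_of_int (xs (2 * j - 1)) / 2)
           ((- 1) ^ j * real_of_int (ys (2 * j - 1)) / 2)"
  proof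
    fix j assume j: "j \<in> {1 .. 6 * n + 1}"
    define m where "m = 2 * j - 1"
    have m: "odd m" "1 \<le> m" "m + 2 \<le> N" using j unfolding m_def N_def by auto
    note pm = per_m[OF m(3,2), folded Phi_def Psi_def]
    note xo = xy_odd[OF m(1)]
    have y: "real_of_int (ys m) = (phi ^ m + gm ^ m) / sqrt 5" using xo s5 by (simp add: field_simps)
    have e: "(- 1 :: real) ^ j = 1 \<or> (- 1 :: real) ^ j = -1" by (cases "even j") auto
    show "totally_positive p r
           ((real_of_int (ys (2 * j - 1)) * X + 1) / 2)
           ((real_of_int (xs (2 * j - 1)) * X - (- 1) ^ j) / 10)
           ((- 1) ^ j * real_of_int (xs (2 * j - 1)) / 2)
           ((- 1) ^ j * real_of_int (ys (2 * j - 1)) / 2)"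
      unfolding m_def[symmetric]
    proof (rule tp_intro[OF p00 sr])
      fix u :: real assume u: "u = sqrt 5 \<or> u = - sqrt 5"
      have F0: "phi ^ m > 0" using pg(2) by simp
      have G0: "gm ^ m > 0" using pm by blast
      show "\<bar>(- 1) ^ j * real_of_int (xs m) / 2 + (- 1) ^ j * real_of_int (ys m) / 2 * u\<bar> * sqrt p
          < (real_of_int (ys m) * X + 1) / 2 + (real_of_int (xs m) * X - (- 1) ^ j) / 10 * u"
        by (rule gamma_ok[OF conjunct1[OF xo] y F0 G0 qX[unfolded q_def] e qq(2)[unfolded q_def] u])
    qed
  qed
  have t4: "totally_positive p r (1 / 4) (- 1 / 20) 0 (- 1 / (5 * (X + Y)))"
    by (rule tp_intro[OF p00 sr], rule deltaA_ok[of "sqrt p"]) (use qq qX XsY Y2 q_def in auto)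
  have t5: "\<forall>j \<in> {1 .. 3 * n}. \<forall>\<sigma> \<in> {1, -1 :: real}.
         totally_positive p r (1 / 4) (- 1 / 20)
           (\<sigma> * (X - real_of_int (xs (4 * j - 1))) / (20 * p))
           (- \<sigma> * (X - real_of_int (ys (4 * j - 1))) / (4 * r))"
  proof (intro ballI)
    fix j \<sigma> assume j: "j \<in> {1 .. 3 * n}" and sg: "\<sigma> \<in> {1, -1 :: real}"
    define m where "m = 4 * j - 1"
    have m: "odd m" "1 \<le> m" "m + 2 \<le> N" "m \<ge> 3" using j unfolding m_def N_def by auto
    note pm = per_m[OF m(3,2), folded Phi_def Psi_def]
    note xo = xy_odd[OF m(1)]
    have y: "real_of_int (ys m) = (phi ^ m + gm ^ m) / sqrt 5" using xo s5 by (simp add: field_simps)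
    have GX: "gm ^ m * X \<ge> 1" using pm XPhi by simp
    have F2: "2 * phi ^ m > 1 + sqrt 5" using pm m(4) by (simp add: phi_def)
    have F3: "2 * phi ^ m \<le> (1 + sqrt 5) * X" using pm XPhi by (simp add: phi_def)
    show "totally_positive p r (1 / 4) (- 1 / 20)
           (\<sigma> * (X - real_of_int (xs (4 * j - 1))) / (20 * p))
           (- \<sigma> * (X - real_of_int (ys (4 * j - 1))) / (4 * r))"
      unfolding m_def[symmetric]
    proof (rule tp_intro[OF p00 sr])
      fix u :: real assume u: "u = sqrt 5 \<or> u = - sqrt 5"
      have G0: "gm ^ m > 0" "gm ^ m \<le> 1" using pm by blast+
      have s1: "\<sigma> = 1 \<or> \<sigma> = -1" using sg by auto
      show "\<bar>\<sigma> * (X - real_of_int (xs m)) / (20 * p) + - \<sigma> * (X - real_of_int (ys m)) / (4 * r) * u\<bar> * sqrt p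
          < 1 / 4 + - 1 / 20 * u"
        by (rule deltaB_ok[OF qq(2)[unfolded q_def] qq(1)[unfolded q_def, symmetric] rq[unfolded q_def]
           conjunct1[OF xo] y G0 GX XQ[unfolded q_def] qX[unfolded q_def] X3 F2 F3 s1 u])
    qed
  qed
  have t6: "\<forall>j \<in> {1 .. 6 * n + 1}. \<forall>\<sigma> \<in> {1, -1 :: real}.
         totally_positive p r (1 / 4) (\<sigma> / 20)
           (- (Y - real_of_int (ys (2 * j - 1))) / (4 * p))
           (- \<sigma> * (Y - real_of_int (xs (2 * j - 1))) / (4 * r))"
  proof (intro ballI)
    fix j \<sigma> assume j: "j \<in> {1 .. 6 * n + 1}" and sg: "\<sigma> \<in> {1, -1 :: real}"
    define m where "m = 2 * j - 1"
    have m: "odd m" "1 \<le> m" "m + 2 \<le> N" using j unfolding m_def N_def by auto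
    note pm = per_m[OF m(3,2), folded Phi_def Psi_def]
    note xo = xy_odd[OF m(1)]
    have y: "real_of_int (ys m) = (phi ^ m + gm ^ m) / sqrt 5" using xo s5 by (simp add: field_simps)
    have "sqrt 5 * gm ^ m * Y = gm ^ m * (Y * sqrt 5)" by (simp add: ac_simps)
    also have "\<dots> = gm ^ m * (Phi + Psi)" using YPhi by simp
    finally have GYe: "sqrt 5 * gm ^ m * Y = gm ^ m * (Phi + Psi)" .
    have "2 \<le> gm ^ m * (Phi + Psi)" using pm by blast
    then have GY: "sqrt 5 * gm ^ m * Y \<ge> 2" using GYe by linarith
    have F2: "2 * phi ^ m \<ge> 1 + sqrt 5" using pm by (simp add: phi_def)
    have F3: "2 * sqrt 5 * phi ^ m \<le> (5 + sqrt 5) * Y"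
    proof -
      have a: "phi ^ m * sqrt 5 \<le> phi * (Phi + Psi)" using pm by blast
      have "2 * sqrt 5 * phi ^ m = 2 * (phi ^ m * sqrt 5)" by (simp add: ac_simps)
      also have "\<dots> \<le> 2 * (phi * (Y * sqrt 5))" using a unfolding YPhi by simp
      also have "\<dots> = (5 + sqrt 5) * Y" unfolding phi_def using s5
        by (simp add: algebra_simps)
      finally show ?thesis .
    qed
    show "totally_positive p r (1 / 4) (\<sigma> / 20)
           (- (Y - real_of_int (ys (2 * j - 1))) / (4 * p))
           (- \<sigma> * (Y - real_of_int (xs (2 * j - 1))) / (4 * r))"
      unfolding m_def[symmetric]
    proof (rule tp_intro[OF p00 sr])
      fix u :: real assume u: "u = sqrt 5 \<or> u = - sqrt 5"
      have w: "\<sigma> * u = sqrt 5 \<or> \<sigma> * u = - sqrt 5" using u sg by auto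
      have E1: "- (Y - real_of_int (ys m)) / (4 * p) + - \<sigma> * (Y - real_of_int (xs m)) / (4 * r) * u
          = - (Y - real_of_int (ys m)) / (4 * p) - (\<sigma> * u) * (Y - real_of_int (xs m)) / (20 * p)"
        using rq qq p0 by (simp add: field_simps)
      have E2: "1 / 4 + \<sigma> / 20 * u = (5 + \<sigma> * u) / 20" by (simp add: field_simps)
      have "\<bar>- (Y - real_of_int (ys m)) / (4 * p) - (\<sigma> * u) * (Y - real_of_int (xs m)) / (20 * p)\<bar> * sqrt p
          < (5 + \<sigma> * u) / 20"
      proof -
        have G0: "gm ^ m > 0" "gm ^ m \<le> 1" using pm by blast+
        show ?thesis
          by (rule deltaC_w[OF qq(2)[unfolded q_def] qq(1)[unfolded q_def, symmetric]
           conjunct1[OF xo] y G0 GY YQ[unfolded q_def] qY[unfolded q_def] Y2 F2 F3 w])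
      qed
      then show "\<bar>- (Y - real_of_int (ys m)) / (4 * p) + - \<sigma> * (Y - real_of_int (xs m)) / (4 * r) * u\<bar> * sqrt p
          < 1 / 4 + \<sigma> / 20 * u" unfolding E1 E2 .
    qed
  qed
  show ?thesis using t1 t2 t3 t4 t5 t6 by blast
qed

end
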